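(* Let $0<\gamma<\infty$ and $T>0$. Let $(u_1,\omega_1,\psi_1)$ be a classical solution of the system $$\partial_t u_1 + u^r\partial_r u_1 + u^z\partial_z u_1 = 2u_1\partial_z\psi_1,\qquad \partial_t \omega_1 + u^r\partial_r \omega_1 + u^z\partial_z \omega_1 = \partial_z(u_1^2),$$ $$-\Big(\partial_r^2+\frac{3}{r}\partial_r+\partial_z^2\Big)\psi_1=\omega_1,\qquad u^r=-r\partial_z\psi_1,\quad u^z=2\psi_1+r\partial_r\psi_1,$$ in a space-time region $\mathcal{W}$, where $\mathcal{W}$ is either (i) $\mathcal{C}_{\delta,T}=\{(r,z,t): 1-\delta<r<1,\ -\delta<z<\delta,\ T-\delta<t<T\}$ for some $0<\delta\ll 1$, or (ii) $\mathcal{W}_{\delta(t)}=\{(r,z,t): 1-\delta(t)<r<1,\ -\delta(t)<z<\delta(t),\ T_0<t<T\}$ for some $T_0<T$ and some decreasing function $\delta:(T_0,T)\to(0,\infty)$ with $\lim_{t\to T^-}\delta(t)=0$ and $\limsup_{t\to T^-}(T-t)^{-\gamma}\delta(t)=\infty$. Suppose that on $\mathcal{W}$ the solution has the self-similar form $$u_1(r,z,t)=(T-t)^{-1+\frac{\gamma}{2}}U(R,Z),\quad \omega_1(r,z,t)=(T-t)^{-1}\Omega(R,Z),\quad \psi_1(r,z,t)=(T-t)^{-1+2\gamma}\Psi(R,Z),$$ with $R=(r-1)(T-t)^{-\gamma}$, $Z=z(T-t)^{-\gamma}$, where the profiles $U,\Omega,\Psi$ are sufficiently smooth (classical) functions independent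 of $t$ defined on the closed left half-plane $\mathcal{D}=\{(R,Z)\in\mathbb{R}^2: R\le 0\}$. Assume the decay condition: for every fixed $R\le 0$, $$|U(R,Z)|+|\Omega(R,Z)|\to 0\quad\text{as } |Z|\to\infty.$$ Then $u_1\equiv 0$ and $\omega_1\equiv 0$ on $\mathcal{W}$, and there are constants $a,b$ such that $\psi_1(r,z,t)=a(T-t)^{-1+\gamma}z+b(T-t)^{-1+2\gamma}$ there (equivalently $\Psi(R,Z)=aZ+b$ on $\mathcal{D}$).
   Context: This concerns axisymmetric solutions of the 3D incompressible Euler equations in the cylinder $\{0<r<1\}$ in cylindrical coordinates $(r,\theta,z)$, with velocity $u=u^re_r+u^\theta e_\theta+u^ze_z$ independent of $\theta$. Here $u_1=u^\theta/r$, $\omega_1=\omega^\theta/r$, $\psi_1=\psi^\theta/r$, where $\omega^\theta$ is the angular component of the vorticity $\mathrm{curl}\,u$ and $\psi^\theta$ is the angular component of the vector stream function $\psi$ (with $\mathrm{curl}\,\psi=u$, $\mathrm{div}\,\psi=0$). No boundary condition at $r=1$ is assumed. $T$ is a (possible) blow-up time. *)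

theory Defs
  imports "HOL-Analysis.Analysis"
begin

definition Dr :: "(real \<Rightarrow> real \<Rightarrow> real \<Rightarrow> real) \<Rightarrow> real \<Rightarrow> real \<Rightarrow> real \<Rightarrow> real" where
  "Dr f r z t = deriv (\<lambda>s. f s z t) r"

definition Dz :: "(real \<Rightarrow> real \<Rightarrow> real \<Rightarrow> real) \<Rightarrow> real \<Rightarrow> real \<Rightarrow> real \<Rightarrow> real" where
  "Dz f r z t = deriv (\<lambda>s. f r s t) z"

definition Dt :: "(real \<Rightarrow> real \<Rightarrow> real \<Rightarrow> real) \<Rightarrow> real \<Rightarrow> real \<Rightarrow> real \<Rightarrow> real" where
  "Dt f r z t = deriv (\<lambda>s. f r z s) t"

text \<open>Iterated partial derivatives of a profile g(R,Z): True = d/dR, False = d/dZ.\<close>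

fun pder :: "bool list \<Rightarrow> (real \<Rightarrow> real \<Rightarrow> real) \<Rightarrow> real \<Rightarrow> real \<Rightarrow> real" where
  "pder [] g = g"
| "pder (b # bs) g =
     (if b then (\<lambda>R Z. deriv (\<lambda>x. pder bs g x Z) R)
      else (\<lambda>R Z. deriv (\<lambda>y. pder bs g R y) Z))"

definition smooth2_on :: "(real \<times> real) set \<Rightarrow> (real \<Rightarrow> real \<Rightarrow> real) \<Rightarrow> bool" where
  "smooth2_on S g \<longleftrightarrow>
     (\<forall>bs. continuous_on S (\<lambda>(R, Z). pder bs g R Z) \<and>
        (\<forall>(R, Z) \<in> S. (\<lambda>x. pder bs g x Z) differentiable (at R) \<and>
                       (\<lambda>y. pder bs g R y) differentiable (at Z)))"

definition cyl_region :: "real \<Rightarrow> real \<Rightarrow> (real \<times> real \<times> real) set" where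
  "cyl_region \<delta> T = {(r, z, t). 1 - \<delta> < r \<and> r < 1 \<and> - \<delta> < z \<and> z < \<delta> \<and> T - \<delta> < t \<and> t < T}"

text \<open>Case (ii): W_{delta(t)}, intersected with the cylinder 0 < r.\<close>
definition moving_region :: "real \<Rightarrow> (real \<Rightarrow> real) \<Rightarrow> real \<Rightarrow> (real \<times> real \<times> real) set" where
  "moving_region T0 \<delta> T = {(r, z, t). 0 < r \<and> 1 - \<delta> t < r \<and> r < 1 \<and> - \<delta> t < z \<and> z < \<delta> t \<and> T0 < t \<and> t < T}"

definition half_plane :: "(real \<times> real) set" where
  "half_plane = {(R, Z). R \<le> 0}"

end

theory Submission
  imports Defs
begin

lemma small_pow:
  fixes \<gamma> D M \<tau> :: real
  assumes "0 < \<gamma>" "0 < D" "0 < M" "0 \<le> \<tau>" "\<tau> < (D/M) powr (1/\<gamma>)"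
  shows "M * \<tau> powr \<gamma> < D"
proof -
  have "\<tau> powr \<gamma> < ((D/M) powr (1/\<gamma>)) powr \<gamma>"
    by (rule powr_less_mono2) (use assms in auto)
  also have "\<dots> = D/M" using assms by (simp add: powr_powr)
  finally show ?thesis using assms by (simp add: field_simps)
qed

lemma W_props:
  assumes region:
      "(\<exists>\<delta>. 0 < \<delta> \<and> \<delta> < 1 \<and> W = cyl_region \<delta> T) \<or>
       (\<exists>T0 \<delta>. T0 < T \<and> (\<forall>t. T0 < t \<and> t < T \<longrightarrow> 0 < \<delta> t) \<and>
          (\<forall>s t. T0 < s \<and> s \<le> t \<and> t < T \<longrightarrow> \<delta> t \<le> \<delta> s) \<and>
          (\<delta> \<longlongrightarrow> 0) (at_left T) \<and>
          Limsup (at_left T) (\<lambda>t. ereal ((T - t) powr (- \<gamma>) * \<delta> t)) = \<infinity> \<and>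
          W = moving_region T0 \<delta> T)"
    and "(r, z, t) \<in> W"
  shows "0 < r \<and> r < 1 \<and> t < T"
  using assms by (auto simp: cyl_region_def moving_region_def)

lemma box_lemma:
  fixes \<gamma> T R Z :: real
  assumes gamma_pos: "0 < \<gamma>"
    and region:
      "(\<exists>\<delta>. 0 < \<delta> \<and> \<delta> < 1 \<and> W = cyl_region \<delta> T) \<or>
       (\<exists>T0 \<delta>. T0 < T \<and> (\<forall>t. T0 < t \<and> t < T \<longrightarrow> 0 < \<delta> t) \<and>
          (\<forall>s t. T0 < s \<and> s \<le> t \<and> t < T \<longrightarrow> \<delta> t \<le> \<delta> s) \<and>
          (\<delta> \<longlongrightarrow> 0) (at_left T) \<and>
          Limsup (at_left T) (\<lambda>t. ereal ((T - t) powr (- \<gamma>) * \<delta> t)) = \<infinity> \<and>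
          W = moving_region T0 \<delta> T)"
    and R: "R < 0"
  shows "\<exists>r1 z1 z2 t1 t2 \<tau>1 \<tau>2. 0 < r1 \<and> 0 \<le> \<tau>1 \<and> \<tau>1 < \<tau>2 \<and> t2 \<le> T \<and>
     (\<forall>r z t. r1 < r \<and> r < 1 \<and> z1 < z \<and> z < z2 \<and> t1 < t \<and> t < t2 \<longrightarrow> (r, z, t) \<in> W) \<and>
     (\<forall>\<tau>. \<tau>1 < \<tau> \<and> \<tau> < \<tau>2 \<longrightarrow> r1 < 1 + R * \<tau> powr \<gamma> \<and> z1 < Z * \<tau> powr \<gamma> \<and>
          Z * \<tau> powr \<gamma> < z2 \<and> t1 < T - \<tau> \<and> T - \<tau> < t2)"
proof -
  define M where "M = \<bar>R\<bar> + \<bar>Z\<bar> + 1"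
  have M: "0 < M" by (simp add: M_def)
  have key: "1 - D < 1 + R * \<tau> powr \<gamma> \<and> - D < Z * \<tau> powr \<gamma> \<and> Z * \<tau> powr \<gamma> < D"
    if "0 < D" "0 \<le> \<tau>" "\<tau> < (D/M) powr (1/\<gamma>)" for D \<tau>
  proof -
    have a: "M * \<tau> powr \<gamma> < D" by (rule small_pow) (use that M gamma_pos in auto)
    have p: "0 \<le> \<tau> powr \<gamma>" by simp
    have "\<bar>R\<bar> * \<tau> powr \<gamma> \<le> M * \<tau> powr \<gamma>" "\<bar>Z\<bar> * \<tau> powr \<gamma> \<le> M * \<tau> powr \<gamma>"
      using p by (auto simp: M_def intro!: mult_right_mono)
    moreover have "- (\<bar>R\<bar> * \<tau> powr \<gamma>) \<le> R * \<tau> powr \<gamma>" using R by simp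
    moreover have "\<bar>Z * \<tau> powr \<gamma>\<bar> = \<bar>Z\<bar> * \<tau> powr \<gamma>"
      using p by (auto simp: abs_mult)
    ultimately show ?thesis using a by auto
  qed
  from region show ?thesis
  proof
    assume "\<exists>\<delta>. 0 < \<delta> \<and> \<delta> < 1 \<and> W = cyl_region \<delta> T"
    then obtain \<delta> where d: "0 < \<delta>" "\<delta> < 1" "W = cyl_region \<delta> T" by blast
    define \<tau>2 where "\<tau>2 = min \<delta> ((\<delta>/M) powr (1/\<gamma>))"
    have t2: "0 < \<tau>2" using d M by (simp add: \<tau>2_def)
    show ?thesis
      apply (rule exI[of _ "1 - \<delta>"], rule exI[of _ "-\<delta>"], rule exI[of _ "\<delta>"],
             rule exI[of _ "T - \<delta>"], rule exI[of _ T], rule exI[of _ 0], rule exI[of _ \<tau>2])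
      using d t2 key[of \<delta>] by (auto simp: cyl_region_def \<tau>2_def)
  next
    assume "\<exists>T0 \<delta>. T0 < T \<and> (\<forall>t. T0 < t \<and> t < T \<longrightarrow> 0 < \<delta> t) \<and>
          (\<forall>s t. T0 < s \<and> s \<le> t \<and> t < T \<longrightarrow> \<delta> t \<le> \<delta> s) \<and>
          (\<delta> \<longlongrightarrow> 0) (at_left T) \<and>
          Limsup (at_left T) (\<lambda>t. ereal ((T - t) powr (- \<gamma>) * \<delta> t)) = \<infinity> \<and>
          W = moving_region T0 \<delta> T"
    then obtain T0 \<delta> where h: "T0 < T" "\<And>t. T0 < t \<Longrightarrow> t < T \<Longrightarrow> 0 < \<delta> t"
      "\<And>s t. T0 < s \<Longrightarrow> s \<le> t \<Longrightarrow> t < T \<Longrightarrow> \<delta> t \<le> \<delta> s"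
      "(\<delta> \<longlongrightarrow> 0) (at_left T)"
      "Limsup (at_left T) (\<lambda>t. ereal ((T - t) powr (- \<gamma>) * \<delta> t)) = \<infinity>"
      "W = moving_region T0 \<delta> T" by blast
    have fr: "\<exists>\<^sub>F t in at_left T. M < (T - t) powr (- \<gamma>) * \<delta> t"
    proof (rule ccontr)
      assume "\<not> ?thesis"
      then have "\<forall>\<^sub>F t in at_left T. ereal ((T - t) powr (- \<gamma>) * \<delta> t) \<le> ereal M"
        by (simp add: not_frequently not_less)
      then have "Limsup (at_left T) (\<lambda>t. ereal ((T - t) powr (- \<gamma>) * \<delta> t)) \<le> ereal M"
        by (rule Limsup_bounded)
      with h(5) show False by simp
    qed
    have ev1: "\<forall>\<^sub>F t in at_left T. \<delta> t < 1" using h(4) by (rule order_tendstoD) simp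
    have ev2: "\<forall>\<^sub>F t in at_left T. T0 < t \<and> t < T"
      using h(1) by (auto simp: eventually_at_left intro!: exI[of _ T0])
    have "\<exists>\<^sub>F t in at_left T. M < (T - t) powr (- \<gamma>) * \<delta> t \<and> (\<delta> t < 1 \<and> T0 < t \<and> t < T)"
      by (rule frequently_eventually_frequently[OF fr eventually_conj[OF ev1 ev2]])
    then obtain tn where tn: "M < (T - tn) powr (- \<gamma>) * \<delta> tn" "\<delta> tn < 1" "T0 < tn" "tn < T"
      by (auto dest: frequently_ex)
    define D where "D = \<delta> tn"
    have D: "0 < D" "D < 1" using h(2) tn by (auto simp: D_def)
    define \<tau>n where "\<tau>n = T - tn"
    have tnpos: "0 < \<tau>n" using tn by (simp add: \<tau>n_def)
    have "M * \<tau>n powr \<gamma> < (\<tau>n powr (- \<gamma>) * D) * \<tau>n powr \<gamma>"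
      using tn(1) tnpos by (simp add: D_def \<tau>n_def)
    also have "\<dots> = D" using tnpos by (simp add: powr_minus field_simps)
    finally have MD: "\<tau>n powr \<gamma> < D / M" using M by (simp add: field_simps)
    have "\<tau>n = (\<tau>n powr \<gamma>) powr (1/\<gamma>)" using tnpos gamma_pos by (simp add: powr_powr)
    also have "\<dots> < (D/M) powr (1/\<gamma>)"
      by (rule powr_less_mono2) (use MD gamma_pos in auto)
    finally have tn2: "\<tau>n < (D/M) powr (1/\<gamma>)" .
    define \<tau>2 where "\<tau>2 = min (T - T0) ((D/M) powr (1/\<gamma>))"
    have lt: "\<tau>n < \<tau>2" using tn2 tn by (simp add: \<tau>2_def \<tau>n_def)
    show ?thesis
    proof (rule exI[of _ "1 - D"], rule exI[of _ "-D"], rule exI[of _ D],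
             rule exI[of _ "T - \<tau>2"], rule exI[of _ tn], rule exI[of _ \<tau>n], rule exI[of _ \<tau>2],
           intro conjI allI impI)
      show "0 < 1 - D" "0 \<le> \<tau>n" "\<tau>n < \<tau>2" "tn \<le> T" using D tnpos lt tn by auto
    next
      fix r z t assume a: "1 - D < r \<and> r < 1 \<and> - D < z \<and> z < D \<and> T - \<tau>2 < t \<and> t < tn"
      have tT0: "T0 < t" using a by (auto simp: \<tau>2_def)
      have "D \<le> \<delta> t" unfolding D_def using h(3)[of t tn] a tT0 tn by auto
      then show "(r, z, t) \<in> W" using a D tT0 tn by (auto simp: h(6) moving_region_def)
    next
      fix \<tau> assume a: "\<tau>n < \<tau> \<and> \<tau> < \<tau>2"
      have "\<tau> < (D/M) powr (1/\<gamma>)" using a by (simp add: \<tau>2_def)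
      then have k: "1 - D < 1 + R * \<tau> powr \<gamma> \<and> - D < Z * \<tau> powr \<gamma> \<and> Z * \<tau> powr \<gamma> < D"
        using key[of D \<tau>] D a tnpos by auto
      show "1 - D < 1 + R * \<tau> powr \<gamma>" "- D < Z * \<tau> powr \<gamma>" "Z * \<tau> powr \<gamma> < D" using k by auto
      show "T - \<tau>2 < T - \<tau>" "T - \<tau> < tn" using a by (auto simp: \<tau>n_def)
    qed
  qed
qed

lemma line_deriv:
  fixes F G :: "real \<Rightarrow> real"
  assumes "a < x" "x < b" "\<And>s. a < s \<Longrightarrow> s < b \<Longrightarrow> F s = C * G ((s - k) * E)"
    and "G differentiable (at ((x - k) * E))"
  shows "deriv F x = C * E * deriv G ((x - k) * E)"
proof -
  have g: "(G has_real_derivative deriv G ((x - k) * E)) (at ((x - k) * E))"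
    using assms(4) by (simp add: DERIV_deriv_iff_real_differentiable)
  have l: "((\<lambda>s. (s - k) * E) has_real_derivative E) (at x)"
    by (auto intro!: derivative_eq_intros)
  have "((\<lambda>s. C * G ((s - k) * E)) has_real_derivative C * (deriv G ((x - k) * E) * E)) (at x)"
    by (rule DERIV_cmult, rule DERIV_chain2[OF g l])
  then have "(F has_real_derivative C * (deriv G ((x - k) * E) * E)) (at x)"
    by (rule has_field_derivative_transform_within_open[where S="{a<..<b}"]) (use assms in auto)
  then show ?thesis by (simp add: DERIV_imp_deriv)
qed

lemma pder_append: "pder (bs' @ bs) g = pder bs' (pder bs g)"
  by (induction bs') auto

lemma smooth_pder: "smooth2_on S g \<Longrightarrow> smooth2_on S (pder bs g)"
  unfolding smooth2_on_def
proof (intro allI conjI)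
  fix bs' assume h: "\<forall>bs. continuous_on S (\<lambda>(R, Z). pder bs g R Z) \<and>
        (\<forall>(R, Z)\<in>S. (\<lambda>x. pder bs g x Z) differentiable at R \<and> (\<lambda>y. pder bs g R y) differentiable at Z)"
  show "continuous_on S (\<lambda>(R, Z). pder bs' (pder bs g) R Z)"
    using h[rule_format, of "bs' @ bs"] by (simp add: pder_append)
  show "\<forall>(R, Z)\<in>S. (\<lambda>x. pder bs' (pder bs g) x Z) differentiable at R \<and> (\<lambda>y. pder bs' (pder bs g) R y) differentiable at Z"
    using h[rule_format, of "bs' @ bs"] by (simp add: pder_append)
qed

lemma sm_R: "smooth2_on {(R, Z). R < 0} g \<Longrightarrow> R < 0 \<Longrightarrow> (\<lambda>x. g x Z) differentiable (at R)"
  unfolding smooth2_on_def by (drule spec[of _ "[]"]) auto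

lemma sm_Z: "smooth2_on {(R, Z). R < 0} g \<Longrightarrow> R < 0 \<Longrightarrow> (\<lambda>y. g R y) differentiable (at Z)"
  unfolding smooth2_on_def by (drule spec[of _ "[]"]) auto

lemma Dr_ss:
  assumes "r1 < r" "r < 1" "0 < E"
    and "\<And>s. r1 < s \<Longrightarrow> s < 1 \<Longrightarrow> f s z t = C * P ((s - 1) * E) (z * E)"
    and "smooth2_on {(R, Z). R < 0} P"
  shows "Dr f r z t = C * E * pder [True] P ((r - 1) * E) (z * E)"
proof -
  have "(r - 1) * E < 0" using assms by (simp add: mult_neg_pos)
  then have d: "(\<lambda>x. P x (z * E)) differentiable (at ((r - 1) * E))" using sm_R assms(5) by blast
  have "deriv (\<lambda>s. f s z t) r = C * E * deriv (\<lambda>x. P x (z * E)) ((r - 1) * E)"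
    by (rule line_deriv[OF assms(1,2) _ d]) (use assms(4) in auto)
  then show ?thesis by (simp add: Dr_def)
qed

lemma Dz_ss:
  assumes "z1 < z" "z < z2" "R0 < 0"
    and "\<And>y. z1 < y \<Longrightarrow> y < z2 \<Longrightarrow> f r y t = C * P R0 ((y - 0) * E)"
    and "smooth2_on {(R, Z). R < 0} P"
  shows "Dz f r z t = C * E * pder [False] P R0 (z * E)"
proof -
  have d: "(\<lambda>y. P R0 y) differentiable (at ((z - 0) * E))" using sm_Z assms(3,5) by blast
  have "deriv (\<lambda>y. f r y t) z = C * E * deriv (\<lambda>y. P R0 y) ((z - 0) * E)"
    by (rule line_deriv[OF assms(1,2) _ d]) (use assms(4) in auto)
  then show ?thesis by (simp add: Dz_def)
qed

lemma powr_facts: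
  fixes \<tau> \<gamma> :: real assumes "0 < \<tau>"
  shows "\<tau> powr (-1 + 2*\<gamma>) = inverse \<tau> * (\<tau> powr \<gamma>) * (\<tau> powr \<gamma>)"
    and "\<tau> powr (- \<gamma>) = inverse (\<tau> powr \<gamma>)"
    and "\<tau> powr (-1) = inverse \<tau>"
    and "(\<tau> powr (-1 + \<gamma>/2))^2 = inverse \<tau> * inverse \<tau> * \<tau> powr \<gamma>"
    and "\<tau> powr (-1 + \<gamma>) = inverse \<tau> * \<tau> powr \<gamma>"
proof -
  have "\<tau> powr (-1 + 2*\<gamma>) = \<tau> powr (-1 + \<gamma> + \<gamma>)" by (simp add: algebra_simps)
  also have "\<dots> = \<tau> powr (-1) * (\<tau> powr \<gamma>) * (\<tau> powr \<gamma>)"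
    by (simp only: powr_add)
  also have "\<dots> = inverse \<tau> * (\<tau> powr \<gamma>) * (\<tau> powr \<gamma>)"
    using assms by (simp add: powr_minus)
  finally show "\<tau> powr (-1 + 2*\<gamma>) = inverse \<tau> * (\<tau> powr \<gamma>) * (\<tau> powr \<gamma>)" .
  show "\<tau> powr (- \<gamma>) = inverse (\<tau> powr \<gamma>)" by (simp add: powr_minus)
  show "\<tau> powr (-1) = inverse \<tau>" using assms by (simp add: powr_minus)
  have "(\<tau> powr (-1 + \<gamma>/2))^2 = \<tau> powr (-1 + \<gamma>/2) * \<tau> powr (-1 + \<gamma>/2)" by (simp add: power2_eq_square)
  also have "\<dots> = \<tau> powr (-1 + -1 + \<gamma>)" by (simp add: powr_add[symmetric])
  also have "\<dots> = \<tau> powr (-1) * \<tau> powr (-1) * \<tau> powr \<gamma>" by (simp only: powr_add)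
  also have "\<dots> = inverse \<tau> * inverse \<tau> * \<tau> powr \<gamma>" using assms by (simp add: powr_minus)
  finally show "(\<tau> powr (-1 + \<gamma>/2))^2 = inverse \<tau> * inverse \<tau> * \<tau> powr \<gamma>" .
  have "\<tau> powr (-1 + \<gamma>) = \<tau> powr (-1) * \<tau> powr \<gamma>" by (simp only: powr_add)
  then show "\<tau> powr (-1 + \<gamma>) = inverse \<tau> * \<tau> powr \<gamma>" using assms by (simp add: powr_minus)
qed

lemma stepA_tau:
  fixes \<gamma> T \<tau> R Z :: real
    and u1 \<omega>1 \<psi>1 :: "real \<Rightarrow> real \<Rightarrow> real \<Rightarrow> real"
    and U \<Omega> \<Psi> :: "real \<Rightarrow> real \<Rightarrow> real"
  assumes gp: "0 < \<gamma>"
    and box: "\<forall>r z t. r1 < r \<and> r < 1 \<and> z1 < z \<and> z < z2 \<and> t1 < t \<and> t < t2 \<longrightarrow> (r, z, t) \<in> W"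
    and r1: "0 < r1"
    and tau: "0 < \<tau>" "r1 < 1 + R * \<tau> powr \<gamma>" "z1 < Z * \<tau> powr \<gamma>" "Z * \<tau> powr \<gamma> < z2"
       "t1 < T - \<tau>" "T - \<tau> < t2"
    and R: "R < 0"
    and Psi_smooth: "smooth2_on {(R, Z). R < 0} \<Psi>"
    and self_similar:
      "\<And>r z t. (r, z, t) \<in> W \<Longrightarrow>
         u1 r z t = (T - t) powr (-1 + \<gamma> / 2) * U ((r - 1) * (T - t) powr (- \<gamma>)) (z * (T - t) powr (- \<gamma>)) \<and>
         \<omega>1 r z t = (T - t) powr (-1) * \<Omega> ((r - 1) * (T - t) powr (- \<gamma>)) (z * (T - t) powr (- \<gamma>)) \<and>
         \<psi>1 r z t = (T - t) powr (-1 + 2 * \<gamma>) * \<Psi> ((r - 1) * (T - t) powr (- \<gamma>)) (z * (T - t) powr (- \<gamma>))"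
    and eq_psi:
      "\<And>r z t. (r, z, t) \<in> W \<Longrightarrow>
         - (Dr (Dr \<psi>1) r z t + 3 / r * Dr \<psi>1 r z t + Dz (Dz \<psi>1) r z t) = \<omega>1 r z t"
  shows "pder [True, True] \<Psi> R Z + pder [False, False] \<Psi> R Z + \<Omega> R Z
           + 3 * (\<tau> powr \<gamma>) / (1 + R * \<tau> powr \<gamma>) * pder [True] \<Psi> R Z = 0"
proof -
  define t where "t = T - \<tau>"
  define q where "q = \<tau> powr \<gamma>"
  define E where "E = \<tau> powr (- \<gamma>)"
  define r where "r = 1 + R * q"
  define z where "z = Z * q"
  define C where "C = \<tau> powr (-1 + 2 * \<gamma>)"
  have Tt: "T - t = \<tau>" by (simp add: t_def)
  have q: "0 < q" using tau by (simp add: q_def)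
  have E: "E = inverse q" by (simp add: E_def q_def powr_minus)
  have Epos: "0 < E" using q E by simp
  have rE: "(r - 1) * E = R" using q by (simp add: r_def E)
  have zE: "z * E = Z" using q by (simp add: z_def E)
  have rpos: "0 < r" "r1 < r" "r < 1" "z1 < z" "z < z2" "t1 < t" "t < t2"
    using tau R q box r1 by (auto simp: r_def z_def t_def q_def mult_neg_pos)
  have C: "C = inverse \<tau> * q * q" using powr_facts(1)[OF tau(1)] by (simp add: C_def q_def)
  have ss: "\<psi>1 s y t = C * \<Psi> ((s - 1) * E) (y * E)" if "r1 < s" "s < 1" "z1 < y" "y < z2" for s y
  proof -
    have "(s, y, t) \<in> W" using box that rpos by auto
    from self_similar[OF this] show ?thesis by (simp add: Tt C_def E_def)
  qed
  have om: "\<omega>1 r z t = inverse \<tau> * \<Omega> R Z"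
  proof -
    have "(r, z, t) \<in> W" using box rpos by auto
    from self_similar[OF this] have "\<omega>1 r z t = (T-t) powr (-1) * \<Omega> ((r-1)*(T-t) powr (-\<gamma>)) (z*(T-t) powr (-\<gamma>))"
      by blast
    then show ?thesis by (simp only: Tt E_def[symmetric] rE zE powr_facts(3)[OF tau(1)])
  qed
  have D1: "Dr \<psi>1 s z t = C * E * pder [True] \<Psi> ((s - 1) * E) (z * E)" if "r1 < s" "s < 1" for s
    by (rule Dr_ss[OF that Epos _ Psi_smooth]) (use ss rpos in auto)
  have D2: "Dr (Dr \<psi>1) r z t = (C * E) * E * pder [True] (pder [True] \<Psi>) ((r - 1) * E) (z * E)"
    by (rule Dr_ss[OF rpos(2,3) Epos _ smooth_pder[OF Psi_smooth]]) (use D1 in auto)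
  have D3: "Dz \<psi>1 r y t = C * E * pder [False] \<Psi> R (y * E)" if "z1 < y" "y < z2" for y
    by (rule Dz_ss[OF that R _ Psi_smooth]) (use ss rpos rE in auto)
  have D4: "Dz (Dz \<psi>1) r z t = (C * E) * E * pder [False] (pder [False] \<Psi>) R (z * E)"
    by (rule Dz_ss[OF rpos(4,5) R _ smooth_pder[OF Psi_smooth]]) (use D3 in auto)
  have CE: "C * E = inverse \<tau> * q" "C * E * E = inverse \<tau>" using q by (simp_all add: C E field_simps)
  have D2': "Dr (Dr \<psi>1) r z t = inverse \<tau> * pder [True, True] \<Psi> R Z"
    using D2 rE zE by (simp add: CE(2))
  have D4': "Dz (Dz \<psi>1) r z t = inverse \<tau> * pder [False, False] \<Psi> R Z"
    using D4 rE zE by (simp add: CE(2))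
  have D1': "Dr \<psi>1 r z t = inverse \<tau> * q * pder [True] \<Psi> R Z"
    using D1[OF rpos(2,3)] rE zE by (simp add: CE(1))
  have "(r, z, t) \<in> W" using box rpos by auto
  from eq_psi[OF this] have "- (inverse \<tau> * pder [True, True] \<Psi> R Z + 3 / r * (inverse \<tau> * q * pder [True] \<Psi> R Z)
        + inverse \<tau> * pder [False, False] \<Psi> R Z) = inverse \<tau> * \<Omega> R Z"
    by (simp only: D1' D2' D4' om)
  then have "inverse \<tau> * (pder [True, True] \<Psi> R Z + pder [False, False] \<Psi> R Z + \<Omega> R Z
           + 3 * q / r * pder [True] \<Psi> R Z) = 0"
    by (simp add: algebra_simps)
  then have "pder [True, True] \<Psi> R Z + pder [False, False] \<Psi> R Z + \<Omega> R Z
           + 3 * q / r * pder [True] \<Psi> R Z = 0" using tau(1) by simp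
  then show ?thesis by (simp add: r_def q_def)
qed

lemma two_vals:
  fixes q1 q2 R A P :: real
  assumes "0 < q1" "q1 < q2" "0 < 1 + R * q1" "0 < 1 + R * q2"
    and "A + 3 * q1 / (1 + R * q1) * P = 0" "A + 3 * q2 / (1 + R * q2) * P = 0"
  shows "P = 0 \<and> A = 0"
proof -
  define x1 where "x1 = q1 / (1 + R * q1)"
  define x2 where "x2 = q2 / (1 + R * q2)"
  have "A + 3 * x1 * P = 0" "A + 3 * x2 * P = 0" using assms(5,6) by (simp_all add: x1_def x2_def)
  moreover have "3 * ((x1 - x2) * P) = (A + 3 * x1 * P) - (A + 3 * x2 * P)" by (simp add: algebra_simps)
  ultimately have "(x1 - x2) * P = 0" by simp
  then have "(q1 / (1 + R * q1) - q2 / (1 + R * q2)) * P = 0" by (simp add: x1_def x2_def)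
  moreover have "q1 / (1 + R * q1) \<noteq> q2 / (1 + R * q2)"
  proof
    assume "q1 / (1 + R * q1) = q2 / (1 + R * q2)"
    then have "q1 * (1 + R * q2) = q2 * (1 + R * q1)" using assms(3,4) by (simp add: field_simps)
    then have "q1 = q2" by (simp add: algebra_simps)
    then show False using assms by simp
  qed
  ultimately have "P = 0" by simp
  then show ?thesis using assms(5) by simp
qed

lemma two_taus:
  fixes \<gamma> \<tau>1 \<tau>2 :: real
  assumes "0 < \<gamma>" "0 \<le> \<tau>1" "\<tau>1 < \<tau>2"
  obtains \<tau>a \<tau>b where "\<tau>1 < \<tau>a" "\<tau>a < \<tau>2" "\<tau>1 < \<tau>b" "\<tau>b < \<tau>2" "0 < \<tau>a"
    "\<tau>a powr \<gamma> < \<tau>b powr \<gamma>"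
proof -
  define \<tau>a where "\<tau>a = \<tau>1 + (\<tau>2 - \<tau>1) / 3"
  define \<tau>b where "\<tau>b = \<tau>1 + 2 * (\<tau>2 - \<tau>1) / 3"
  have "\<tau>a powr \<gamma> < \<tau>b powr \<gamma>"
    by (rule powr_less_mono2) (use assms in \<open>auto simp: \<tau>a_def \<tau>b_def\<close>)
  moreover have "\<tau>1 < \<tau>a" "\<tau>a < \<tau>2" "\<tau>1 < \<tau>b" "\<tau>b < \<tau>2" "0 < \<tau>a"
    using assms by (auto simp: \<tau>a_def \<tau>b_def field_simps)
  ultimately show ?thesis using that by blast
qed

lemma stepC_tau:
  fixes \<gamma> T \<tau> R Z :: real
    and u1 \<omega>1 \<psi>1 :: "real \<Rightarrow> real \<Rightarrow> real \<Rightarrow> real"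
    and U \<Omega> \<Psi> :: "real \<Rightarrow> real \<Rightarrow> real" and h :: "real \<Rightarrow> real"
  assumes gp: "0 < \<gamma>"
    and box: "\<forall>r z t. r1 < r \<and> r < 1 \<and> z1 < z \<and> z < z2 \<and> t1 < t \<and> t < t2 \<longrightarrow> (r, z, t) \<in> W"
    and r1: "0 < r1" and t2T: "t2 \<le> T"
    and tau: "0 < \<tau>" "r1 < 1 + R * \<tau> powr \<gamma>" "z1 < Z * \<tau> powr \<gamma>" "Z * \<tau> powr \<gamma> < z2"
       "t1 < T - \<tau>" "T - \<tau> < t2"
    and R: "R < 0"
    and Psi_smooth: "smooth2_on {(R, Z). R < 0} \<Psi>"
    and Omega_smooth: "smooth2_on {(R, Z). R < 0} \<Omega>"
    and U_smooth: "smooth2_on {(R, Z). R < 0} U"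
    and hOm: "\<And>R' Z'. R' < 0 \<Longrightarrow> \<Omega> R' Z' = h Z'"
    and hdiff: "\<And>y. h differentiable (at y)"
    and PsiR: "\<And>R' Z'. R' < 0 \<Longrightarrow> pder [True] \<Psi> R' Z' = 0"
    and OmR: "\<And>R' Z'. R' < 0 \<Longrightarrow> pder [True] \<Omega> R' Z' = 0"
    and self_similar:
      "\<And>r z t. (r, z, t) \<in> W \<Longrightarrow>
         u1 r z t = (T - t) powr (-1 + \<gamma> / 2) * U ((r - 1) * (T - t) powr (- \<gamma>)) (z * (T - t) powr (- \<gamma>)) \<and>
         \<omega>1 r z t = (T - t) powr (-1) * \<Omega> ((r - 1) * (T - t) powr (- \<gamma>)) (z * (T - t) powr (- \<gamma>)) \<and>
         \<psi>1 r z t = (T - t) powr (-1 + 2 * \<gamma>) * \<Psi> ((r - 1) * (T - t) powr (- \<gamma>)) (z * (T - t) powr (- \<gamma>))"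
    and eq_omega:
      "\<And>r z t. (r, z, t) \<in> W \<Longrightarrow>
         Dt \<omega>1 r z t + (- r * Dz \<psi>1 r z t) * Dr \<omega>1 r z t
           + (2 * \<psi>1 r z t + r * Dr \<psi>1 r z t) * Dz \<omega>1 r z t
         = Dz (\<lambda>r z t. (u1 r z t)\<^sup>2) r z t"
  shows "h Z + \<gamma> * Z * deriv h Z + 2 * (\<tau> powr \<gamma>) * \<Psi> R Z * deriv h Z = deriv (\<lambda>x. (U R x)^2) Z"
proof -
  define t where "t = T - \<tau>"
  define q where "q = \<tau> powr \<gamma>"
  define E where "E = \<tau> powr (- \<gamma>)"
  define r where "r = 1 + R * q"
  define z where "z = Z * q"
  define C where "C = \<tau> powr (-1 + 2 * \<gamma>)"
  define Cu where "Cu = \<tau> powr (-1 + \<gamma> / 2)"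
  have Tt: "T - t = \<tau>" by (simp add: t_def)
  have q: "0 < q" using tau by (simp add: q_def)
  have E: "E = inverse q" by (simp add: E_def q_def powr_minus)
  have Epos: "0 < E" using q E by simp
  have rE: "(r - 1) * E = R" using q by (simp add: r_def E)
  have zE: "z * E = Z" using q by (simp add: z_def E)
  have rpos: "0 < r" "r1 < r" "r < 1" "z1 < z" "z < z2" "t1 < t" "t < t2"
    using tau R q box r1 by (auto simp: r_def z_def t_def q_def mult_neg_pos)
  have C: "C = inverse \<tau> * q * q" using powr_facts(1)[OF tau(1)] by (simp add: C_def q_def)
  have Cu: "Cu^2 = inverse \<tau> * inverse \<tau> * q" using powr_facts(4)[OF tau(1)] by (simp add: Cu_def q_def)
  have inW: "(s, y, t') \<in> W" if "r1 < s" "s < 1" "z1 < y" "y < z2" "t1 < t'" "t' < t2" for s y t'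
    using box that by auto
  have ssp: "\<psi>1 s y t = C * \<Psi> ((s - 1) * E) (y * E)" if "r1 < s" "s < 1" "z1 < y" "y < z2" for s y
  proof -
    from self_similar[OF inW[OF that rpos(6,7)]]
    have "\<psi>1 s y t = (T - t) powr (-1 + 2 * \<gamma>) * \<Psi> ((s - 1) * (T - t) powr (- \<gamma>)) (y * (T - t) powr (- \<gamma>))"
      by blast
    then show ?thesis by (simp only: Tt C_def[symmetric] E_def[symmetric])
  qed
  have sso: "\<omega>1 s y t = \<tau> powr (-1) * \<Omega> ((s - 1) * E) (y * E)" if "r1 < s" "s < 1" "z1 < y" "y < z2" for s y
  proof -
    from self_similar[OF inW[OF that rpos(6,7)]]
    have "\<omega>1 s y t = (T - t) powr (-1) * \<Omega> ((s - 1) * (T - t) powr (- \<gamma>)) (y * (T - t) powr (- \<gamma>))"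
      by blast
    then show ?thesis by (simp only: Tt E_def[symmetric])
  qed
  have ssu: "u1 r y t = Cu * U R (y * E)" if "z1 < y" "y < z2" for y
  proof -
    from self_similar[OF inW[OF rpos(2,3) that rpos(6,7)]]
    have "u1 r y t = (T - t) powr (-1 + \<gamma> / 2) * U ((r - 1) * (T - t) powr (- \<gamma>)) (y * (T - t) powr (- \<gamma>))"
      by blast
    then show ?thesis by (simp only: Tt Cu_def[symmetric] E_def[symmetric] rE)
  qed
  have Drw: "Dr \<omega>1 r z t = 0"
  proof -
    have "Dr \<omega>1 r z t = \<tau> powr (-1) * E * pder [True] \<Omega> ((r - 1) * E) (z * E)"
      by (rule Dr_ss[OF rpos(2,3) Epos _ Omega_smooth]) (use sso rpos in auto)
    then show ?thesis using OmR R rE by simp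
  qed
  have Drp: "Dr \<psi>1 r z t = 0"
  proof -
    have "Dr \<psi>1 r z t = C * E * pder [True] \<Psi> ((r - 1) * E) (z * E)"
      by (rule Dr_ss[OF rpos(2,3) Epos _ Psi_smooth]) (use ssp rpos in auto)
    then show ?thesis using PsiR R rE by simp
  qed
  have hfun: "(\<lambda>y. \<Omega> R y) = h" using hOm R by auto
  have Dzw: "Dz \<omega>1 r z t = \<tau> powr (-1) * E * deriv h Z"
  proof -
    have "Dz \<omega>1 r z t = \<tau> powr (-1) * E * pder [False] \<Omega> R (z * E)"
      by (rule Dz_ss[OF rpos(4,5) R _ Omega_smooth]) (use sso rpos rE in auto)
    then show ?thesis using zE hfun by simp
  qed
  have psiv: "\<psi>1 r z t = C * \<Psi> R Z" using ssp[OF rpos(2-5)] rE zE by simp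
  have Dzu: "Dz (\<lambda>r z t. (u1 r z t)\<^sup>2) r z t = Cu^2 * E * deriv (\<lambda>x. (U R x)^2) Z"
  proof -
    have d: "(\<lambda>x. (U R x)^2) differentiable (at ((z - 0) * E))"
      using sm_Z[OF U_smooth R] by (auto intro!: derivative_intros)
    have "deriv (\<lambda>y. (u1 r y t)^2) z = Cu^2 * E * deriv (\<lambda>x. (U R x)^2) ((z - 0) * E)"
      by (rule line_deriv[OF rpos(4,5) _ d]) (use ssu in \<open>auto simp: power_mult_distrib\<close>)
    then show ?thesis using zE by (simp add: Dz_def)
  qed
  have Dtw: "Dt \<omega>1 r z t = inverse \<tau> * inverse \<tau> * (h Z + \<gamma> * Z * deriv h Z)"
  proof -
    have ev: "\<omega>1 r z s = (T - s) powr (-1) * h (z * (T - s) powr (- \<gamma>))" if "s \<in> {t1<..<t2}" for s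
    proof -
      have "0 < T - s" using that t2T by auto
      then have neg: "(r - 1) * (T - s) powr (- \<gamma>) < 0" using rpos by (simp add: mult_neg_pos)
      from self_similar[OF inW[OF rpos(2-5)]] that
      have "\<omega>1 r z s = (T - s) powr (-1) * \<Omega> ((r - 1) * (T - s) powr (- \<gamma>)) (z * (T - s) powr (- \<gamma>))"
        by auto
      then show ?thesis using hOm[OF neg] by simp
    qed
    have g1: "((\<lambda>s. T - s) has_real_derivative -1) (at t)" by (auto intro!: derivative_eq_intros)
    have c: "((\<lambda>s. (T - s) powr (-1)) has_real_derivative (-1) * (T - t) powr (-1 - of_nat 1) * (-1)) (at t)"
      by (rule DERIV_fun_powr[OF g1]) (simp add: Tt tau)
    have a0: "((\<lambda>s. (T - s) powr (- \<gamma>)) has_real_derivative (- \<gamma>) * (T - t) powr (- \<gamma> - of_nat 1) * (-1)) (at t)"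
      by (rule DERIV_fun_powr[OF g1]) (simp add: Tt tau)
    have a: "((\<lambda>s. z * (T - s) powr (- \<gamma>)) has_real_derivative z * ((- \<gamma>) * (T - t) powr (- \<gamma> - of_nat 1) * (-1))) (at t)"
      by (rule DERIV_cmult[OF a0])
    have hD: "(h has_real_derivative deriv h Z) (at (z * (T - t) powr (- \<gamma>)))"
      using hdiff[of Z] zE by (simp add: DERIV_deriv_iff_real_differentiable Tt E_def)
    have b: "((\<lambda>s. h (z * (T - s) powr (- \<gamma>))) has_real_derivative
        deriv h Z * (z * ((- \<gamma>) * (T - t) powr (- \<gamma> - of_nat 1) * (-1)))) (at t)"
      by (rule DERIV_chain2[OF hD a])
    have m: "((\<lambda>s. (T - s) powr (-1) * h (z * (T - s) powr (- \<gamma>))) has_real_derivative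
        (-1) * (T - t) powr (-1 - of_nat 1) * (-1) * h (z * (T - t) powr (- \<gamma>))
        + deriv h Z * (z * ((- \<gamma>) * (T - t) powr (- \<gamma> - of_nat 1) * (-1))) * (T - t) powr (-1)) (at t)"
      by (rule DERIV_mult[OF c b])
    have p1: "\<tau> powr (-1 - 1) = inverse \<tau> * inverse \<tau>"
    proof -
      have "\<tau> powr (-1 - 1) = \<tau> powr (-1 + -1)" by simp
      also have "\<dots> = \<tau> powr (-1) * \<tau> powr (-1)" by (simp only: powr_add)
      finally show ?thesis using tau(1) by (simp add: powr_minus)
    qed
    have p2: "\<tau> powr (- \<gamma> - 1) = E * inverse \<tau>"
    proof -
      have "\<tau> powr (- \<gamma> - 1) = \<tau> powr (- \<gamma> + -1)" by simp
      also have "\<dots> = \<tau> powr (- \<gamma>) * \<tau> powr (-1)" by (simp only: powr_add)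
      finally show ?thesis using tau(1) by (simp add: powr_minus E_def)
    qed
    have "(\<omega>1 r z has_real_derivative
        (-1) * (T - t) powr (-1 - of_nat 1) * (-1) * h (z * (T - t) powr (- \<gamma>))
        + deriv h Z * (z * ((- \<gamma>) * (T - t) powr (- \<gamma> - of_nat 1) * (-1))) * (T - t) powr (-1)) (at t)"
      by (rule has_field_derivative_transform_within_open[OF m, where S="{t1<..<t2}"])
         (use rpos ev in auto)
    then have "Dt \<omega>1 r z t = (-1) * (T - t) powr (-1 - of_nat 1) * (-1) * h (z * (T - t) powr (- \<gamma>))
        + deriv h Z * (z * ((- \<gamma>) * (T - t) powr (- \<gamma> - of_nat 1) * (-1))) * (T - t) powr (-1)"
      by (simp add: Dt_def DERIV_imp_deriv)
    also have "\<dots> = inverse \<tau> * inverse \<tau> * h Z + deriv h Z * (z * (\<gamma> * (E * inverse \<tau>))) * inverse \<tau>"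
      using p1 p2 zE tau(1) by (simp add: Tt E_def[symmetric] powr_facts(3)[OF tau(1)] divide_inverse)
    also have "\<dots> = inverse \<tau> * inverse \<tau> * (h Z + \<gamma> * Z * deriv h Z)"
      using zE by (simp add: algebra_simps)
    finally show ?thesis .
  qed
  have "(r, z, t) \<in> W" using inW rpos by auto
  from eq_omega[OF this] have
    "inverse \<tau> * inverse \<tau> * (h Z + \<gamma> * Z * deriv h Z)
      + (2 * (C * \<Psi> R Z)) * (\<tau> powr (-1) * E * deriv h Z) = Cu^2 * E * deriv (\<lambda>x. (U R x)^2) Z"
    by (simp only: Dtw Drw Drp Dzw psiv Dzu mult_zero_right mult_zero_left add_0_right)
  then have "inverse \<tau> * inverse \<tau> * (h Z + \<gamma> * Z * deriv h Z)
      + (2 * (inverse \<tau> * q * q * \<Psi> R Z)) * (inverse \<tau> * inverse q * deriv h Z)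
      = inverse \<tau> * inverse \<tau> * q * inverse q * deriv (\<lambda>x. (U R x)^2) Z"
    by (simp only: C Cu E powr_facts(3)[OF tau(1)])
  moreover have "(2 * (inverse \<tau> * q * q * \<Psi> R Z)) * (inverse \<tau> * inverse q * deriv h Z)
      = inverse \<tau> * inverse \<tau> * (2 * q * \<Psi> R Z * deriv h Z)" using q by (simp add: field_simps)
  moreover have "inverse \<tau> * inverse \<tau> * q * inverse q * deriv (\<lambda>x. (U R x)^2) Z
      = inverse \<tau> * inverse \<tau> * deriv (\<lambda>x. (U R x)^2) Z" using q by simp
  ultimately have "inverse \<tau> * inverse \<tau> * (h Z + \<gamma> * Z * deriv h Z + 2 * q * \<Psi> R Z * deriv h Z)
     = inverse \<tau> * inverse \<tau> * deriv (\<lambda>x. (U R x)^2) Z" by (simp add: distrib_left)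
  then have "h Z + \<gamma> * Z * deriv h Z + 2 * q * \<Psi> R Z * deriv h Z = deriv (\<lambda>x. (U R x)^2) Z"
    using tau(1) by simp
  then show ?thesis by (simp add: q_def)
qed

lemma deriv_loc_const:
  fixes f :: "real \<Rightarrow> real"
  assumes "open S" "x \<in> S" "\<And>y. y \<in> S \<Longrightarrow> f y = c"
  shows "deriv f x = 0"
proof -
  have "((\<lambda>_. c) has_real_derivative 0) (at x)" by simp
  then have "(f has_real_derivative 0) (at x)"
    by (rule has_field_derivative_transform_within_open[OF _ assms(1,2)]) (use assms(3) in auto)
  then show ?thesis by (rule DERIV_imp_deriv)
qed

lemma const_from_deriv0:
  fixes f :: "real \<Rightarrow> real"
  assumes "convex S" "\<And>y. y \<in> S \<Longrightarrow> f differentiable (at y)" "\<And>y. y \<in> S \<Longrightarrow> deriv f y = 0"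
  shows "\<exists>c. \<forall>y\<in>S. f y = c"
proof (rule has_field_derivative_zero_constant[OF assms(1)])
  fix x assume x: "x \<in> S"
  have "(f has_real_derivative deriv f x) (at x)"
    using assms(2)[OF x] by (simp add: DERIV_deriv_iff_real_differentiable)
  then show "(f has_real_derivative 0) (at x within S)"
    using assms(3)[OF x] by (simp add: has_field_derivative_at_within)
qed

lemma tends0_left:
  fixes f k :: "real \<Rightarrow> real"
  assumes "((\<lambda>Z. \<bar>f Z\<bar> + \<bar>k Z\<bar>) \<longlongrightarrow> 0) at_infinity"
  shows "(f \<longlongrightarrow> 0) at_infinity"
  by (rule Lim_null_comparison[OF _ assms]) auto

lemma const_tends0:
  fixes c :: real
  assumes "((\<lambda>Z::real. c) \<longlongrightarrow> 0) at_infinity"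
  shows "c = 0"
  using assms tendsto_const_iff[OF trivial_limit_at_infinity] by blast

theorem theorem1:
  fixes \<gamma> T :: real
    and W :: "(real \<times> real \<times> real) set"
    and u1 \<omega>1 \<psi>1 :: "real \<Rightarrow> real \<Rightarrow> real \<Rightarrow> real"
    and U \<Omega> \<Psi> :: "real \<Rightarrow> real \<Rightarrow> real"
  assumes gamma_pos: "0 < \<gamma>"
    and T_pos: "0 < T"
    and region:
      "(\<exists>\<delta>. 0 < \<delta> \<and> \<delta> < 1 \<and> W = cyl_region \<delta> T) \<or>
       (\<exists>T0 \<delta>. T0 < T \<and> (\<forall>t. T0 < t \<and> t < T \<longrightarrow> 0 < \<delta> t) \<and>
          (\<forall>s t. T0 < s \<and> s \<le> t \<and> t < T \<longrightarrow> \<delta> t \<le> \<delta> s) \<and>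
          (\<delta> \<longlongrightarrow> 0) (at_left T) \<and>
          Limsup (at_left T) (\<lambda>t. ereal ((T - t) powr (- \<gamma>) * \<delta> t)) = \<infinity> \<and>
          W = moving_region T0 \<delta> T)"
    and U_cont: "continuous_on half_plane (\<lambda>(R, Z). U R Z)"
    and Omega_cont: "continuous_on half_plane (\<lambda>(R, Z). \<Omega> R Z)"
    and Psi_cont: "continuous_on half_plane (\<lambda>(R, Z). \<Psi> R Z)"
    and U_smooth: "smooth2_on {(R, Z). R < 0} U"
    and Omega_smooth: "smooth2_on {(R, Z). R < 0} \<Omega>"
    and Psi_smooth: "smooth2_on {(R, Z). R < 0} \<Psi>"
    and self_similar:
      "\<And>r z t. (r, z, t) \<in> W \<Longrightarrow>
         u1 r z t = (T - t) powr (-1 + \<gamma> / 2) * U ((r - 1) * (T - t) powr (- \<gamma>)) (z * (T - t) powr (- \<gamma>)) \<and>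
         \<omega>1 r z t = (T - t) powr (-1) * \<Omega> ((r - 1) * (T - t) powr (- \<gamma>)) (z * (T - t) powr (- \<gamma>)) \<and>
         \<psi>1 r z t = (T - t) powr (-1 + 2 * \<gamma>) * \<Psi> ((r - 1) * (T - t) powr (- \<gamma>)) (z * (T - t) powr (- \<gamma>))"
    and eq_u:
      "\<And>r z t. (r, z, t) \<in> W \<Longrightarrow>
         Dt u1 r z t + (- r * Dz \<psi>1 r z t) * Dr u1 r z t
           + (2 * \<psi>1 r z t + r * Dr \<psi>1 r z t) * Dz u1 r z t
         = 2 * u1 r z t * Dz \<psi>1 r z t"
    and eq_omega:
      "\<And>r z t. (r, z, t) \<in> W \<Longrightarrow>
         Dt \<omega>1 r z t + (- r * Dz \<psi>1 r z t) * Dr \<omega>1 r z t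
           + (2 * \<psi>1 r z t + r * Dr \<psi>1 r z t) * Dz \<omega>1 r z t
         = Dz (\<lambda>r z t. (u1 r z t)\<^sup>2) r z t"
    and eq_psi:
      "\<And>r z t. (r, z, t) \<in> W \<Longrightarrow>
         - (Dr (Dr \<psi>1) r z t + 3 / r * Dr \<psi>1 r z t + Dz (Dz \<psi>1) r z t) = \<omega>1 r z t"
    and decay:
      "\<And>R. R \<le> 0 \<Longrightarrow> ((\<lambda>Z. \<bar>U R Z\<bar> + \<bar>\<Omega> R Z\<bar>) \<longlongrightarrow> 0) at_infinity"
  shows "(\<forall>(r, z, t) \<in> W. u1 r z t = 0 \<and> \<omega>1 r z t = 0) \<and>
         (\<exists>a b. (\<forall>(r, z, t) \<in> W.
                    \<psi>1 r z t = a * (T - t) powr (-1 + \<gamma>) * z + b * (T - t) powr (-1 + 2 * \<gamma>)) \<and>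
                (\<forall>(R, Z) \<in> half_plane. \<Psi> R Z = a * Z + b))"
proof -
  have S_open: "open {x::real. x < 0}" by (simp add: open_Collect_less)
  have A: "pder [True] \<Psi> R Z = 0 \<and> pder [True, True] \<Psi> R Z + pder [False, False] \<Psi> R Z + \<Omega> R Z = 0"
    if R: "R < 0" for R Z
  proof -
    obtain r1 z1 z2 t1 t2 \<tau>1 \<tau>2 where bx: "0 < r1" "0 \<le> \<tau>1" "\<tau>1 < \<tau>2" "t2 \<le> T"
      "\<forall>r z t. r1 < r \<and> r < 1 \<and> z1 < z \<and> z < z2 \<and> t1 < t \<and> t < t2 \<longrightarrow> (r, z, t) \<in> W"
      "\<forall>\<tau>. \<tau>1 < \<tau> \<and> \<tau> < \<tau>2 \<longrightarrow> r1 < 1 + R * \<tau> powr \<gamma> \<and> z1 < Z * \<tau> powr \<gamma> \<and>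
          Z * \<tau> powr \<gamma> < z2 \<and> t1 < T - \<tau> \<and> T - \<tau> < t2"
      using box_lemma[OF gamma_pos region R, of Z] by blast
    obtain \<tau>a \<tau>b where tt: "\<tau>1 < \<tau>a" "\<tau>a < \<tau>2" "\<tau>1 < \<tau>b" "\<tau>b < \<tau>2" "0 < \<tau>a"
      "\<tau>a powr \<gamma> < \<tau>b powr \<gamma>" using two_taus[OF gamma_pos bx(2,3)] by blast
    have ea: "pder [True, True] \<Psi> R Z + pder [False, False] \<Psi> R Z + \<Omega> R Z
           + 3 * (\<tau>a powr \<gamma>) / (1 + R * \<tau>a powr \<gamma>) * pder [True] \<Psi> R Z = 0"
      by (rule stepA_tau[OF gamma_pos bx(5) bx(1) tt(5) _ _ _ _ _ R Psi_smooth self_similar eq_psi])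
         (use bx(2,6) tt in auto)
    have eb: "pder [True, True] \<Psi> R Z + pder [False, False] \<Psi> R Z + \<Omega> R Z
           + 3 * (\<tau>b powr \<gamma>) / (1 + R * \<tau>b powr \<gamma>) * pder [True] \<Psi> R Z = 0"
      by (rule stepA_tau[OF gamma_pos bx(5) bx(1) _ _ _ _ _ _ R Psi_smooth self_similar eq_psi])
         (use bx(2,6) tt in auto)
    have "0 < 1 + R * \<tau>a powr \<gamma>" "0 < 1 + R * \<tau>b powr \<gamma>" using bx(1,6) tt by force+
    then show ?thesis using two_vals[OF _ tt(6) _ _ ea eb] tt(5) by simp
  qed
  have PsiR: "pder [True] \<Psi> R Z = 0" if "R < 0" for R Z using A[OF that] by blast
  have PsiRR: "pder [True, True] \<Psi> R Z = 0" if "R < 0" for R Z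
  proof -
    have "deriv (\<lambda>x. pder [True] \<Psi> x Z) R = 0"
      by (rule deriv_loc_const[OF S_open, of R _ 0]) (use that PsiR in auto)
    then show ?thesis by simp
  qed
  have OmPsi: "\<Omega> R Z = - pder [False, False] \<Psi> R Z" if "R < 0" for R Z
    using A[OF that, of Z] PsiRR[OF that, of Z] by simp
  define g where "g = \<Psi> (-1)"
  have Psig: "\<Psi> R Z = g Z" if "R < 0" for R Z
  proof -
    have "\<exists>c. \<forall>y\<in>{x. x < 0}. \<Psi> y Z = c"
    proof (rule const_from_deriv0)
      show "convex {x::real. x < 0}" proof -
        have "{x::real. x < 0} = {..<0}" by auto
        then show ?thesis by simp
      qed
      show "(\<lambda>x. \<Psi> x Z) differentiable (at y)" if "y \<in> {x. x < 0}" for y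
        using sm_R[OF Psi_smooth] that by auto
      show "deriv (\<lambda>x. \<Psi> x Z) y = 0" if "y \<in> {x. x < 0}" for y
        using PsiR[of y Z] that by simp
    qed
    then obtain c where "\<forall>y\<in>{x. x < 0}. \<Psi> y Z = c" by blast
    then show ?thesis using that by (simp add: g_def)
  qed
  have Psifun: "(\<lambda>y. \<Psi> R y) = g" if "R < 0" for R using Psig[OF that] by auto
  have PsiZZ: "pder [False, False] \<Psi> R Z = deriv (deriv g) Z" if "R < 0" for R Z
  proof -
    have e: "\<Psi> R = g" using Psifun[OF that] by simp
    have "(\<lambda>y. pder [False] \<Psi> R y) = deriv g" by (simp add: e)
    then show ?thesis by simp
  qed
  define h where "h = (\<lambda>Z. \<Omega> (-1) Z)"
  have hdd: "h Z = - deriv (deriv g) Z" for Z using OmPsi[of "-1" Z] PsiZZ[of "-1" Z] by (simp add: h_def)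
  have hOm: "\<Omega> R Z = h Z" if "R < 0" for R Z using OmPsi[OF that] PsiZZ[OF that] hdd by simp
  have hdiff: "h differentiable (at y)" for y unfolding h_def using sm_Z[OF Omega_smooth, of "-1"] by simp
  have OmR: "pder [True] \<Omega> R Z = 0" if "R < 0" for R Z
  proof -
    have "deriv (\<lambda>x. \<Omega> x Z) R = 0"
      by (rule deriv_loc_const[OF S_open, of R _ "h Z"]) (use that hOm in auto)
    then show ?thesis by simp
  qed
  have C: "\<Psi> R Z * deriv h Z = 0 \<and> h Z + \<gamma> * Z * deriv h Z = deriv (\<lambda>x. (U R x)^2) Z"
    if R: "R < 0" for R Z
  proof -
    obtain r1 z1 z2 t1 t2 \<tau>1 \<tau>2 where bx: "0 < r1" "0 \<le> \<tau>1" "\<tau>1 < \<tau>2" "t2 \<le> T"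
      "\<forall>r z t. r1 < r \<and> r < 1 \<and> z1 < z \<and> z < z2 \<and> t1 < t \<and> t < t2 \<longrightarrow> (r, z, t) \<in> W"
      "\<forall>\<tau>. \<tau>1 < \<tau> \<and> \<tau> < \<tau>2 \<longrightarrow> r1 < 1 + R * \<tau> powr \<gamma> \<and> z1 < Z * \<tau> powr \<gamma> \<and>
          Z * \<tau> powr \<gamma> < z2 \<and> t1 < T - \<tau> \<and> T - \<tau> < t2"
      using box_lemma[OF gamma_pos region R, of Z] by blast
    obtain \<tau>a \<tau>b where tt: "\<tau>1 < \<tau>a" "\<tau>a < \<tau>2" "\<tau>1 < \<tau>b" "\<tau>b < \<tau>2" "0 < \<tau>a"
      "\<tau>a powr \<gamma> < \<tau>b powr \<gamma>" using two_taus[OF gamma_pos bx(2,3)] by blast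
    have ea: "h Z + \<gamma> * Z * deriv h Z + 2 * (\<tau>a powr \<gamma>) * \<Psi> R Z * deriv h Z = deriv (\<lambda>x. (U R x)^2) Z"
      by (rule stepC_tau[OF gamma_pos bx(5) bx(1) bx(4) tt(5) _ _ _ _ _ R Psi_smooth Omega_smooth U_smooth
            hOm hdiff PsiR OmR self_similar eq_omega])
         (use bx(2,6) tt in auto)
    have eb: "h Z + \<gamma> * Z * deriv h Z + 2 * (\<tau>b powr \<gamma>) * \<Psi> R Z * deriv h Z = deriv (\<lambda>x. (U R x)^2) Z"
      by (rule stepC_tau[OF gamma_pos bx(5) bx(1) bx(4) _ _ _ _ _ _ R Psi_smooth Omega_smooth U_smooth
            hOm hdiff PsiR OmR self_similar eq_omega])
         (use bx(2,6) tt in auto)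
    have "2 * (\<tau>b powr \<gamma> - \<tau>a powr \<gamma>) * (\<Psi> R Z * deriv h Z) =
      (h Z + \<gamma> * Z * deriv h Z + 2 * (\<tau>b powr \<gamma>) * \<Psi> R Z * deriv h Z)
      - (h Z + \<gamma> * Z * deriv h Z + 2 * (\<tau>a powr \<gamma>) * \<Psi> R Z * deriv h Z)"
      by (simp add: algebra_simps)
    also have "\<dots> = 0" using ea eb by simp
    finally have "2 * (\<tau>b powr \<gamma> - \<tau>a powr \<gamma>) * (\<Psi> R Z * deriv h Z) = 0" .
    then have p: "\<Psi> R Z * deriv h Z = 0" using tt(6) by simp
    have "2 * (\<tau>a powr \<gamma>) * \<Psi> R Z * deriv h Z = 0"
      by (metis p mult.assoc mult_zero_right)
    then show ?thesis using ea p by linarith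
  qed
  have gh: "g Z * deriv h Z = 0" for Z using C[of "-1" Z] Psig[of "-1" Z] by simp
  have hcont: "isCont (deriv h) Z" for Z
  proof -
    have c0: "continuous_on {(R, Z). R < 0} (\<lambda>(R, Z). pder [False] \<Omega> R Z)"
      using Omega_smooth unfolding smooth2_on_def by blast
    have "continuous_on UNIV (\<lambda>y. (\<lambda>(R, Z). pder [False] \<Omega> R Z) ((-1::real), y))"
      by (rule continuous_on_compose2[OF c0]) (auto intro!: continuous_intros)
    moreover have "(\<lambda>y. (\<lambda>(R, Z). pder [False] \<Omega> R Z) ((-1::real), y)) = deriv h"
      by (simp add: h_def fun_eq_iff)
    ultimately show ?thesis by (simp add: continuous_on_eq_continuous_at)
  qed
  have hd0: "deriv h Z = 0" for Z
  proof (rule ccontr)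
    assume nz: "deriv h Z \<noteq> 0"
    obtain e where e: "0 < e" "\<And>y. dist Z y < e \<Longrightarrow> deriv h y \<noteq> 0"
      using continuous_at_avoid[OF hcont nz] by blast
    have g0: "g y = 0" if "y \<in> ball Z e" for y using gh[of y] e(2)[of y] that by (auto simp: dist_commute)
    have g1: "deriv g y = 0" if "y \<in> ball Z e" for y
      by (rule deriv_loc_const[OF open_ball that, where c=0]) (use g0 in auto)
    have g2: "deriv (deriv g) y = 0" if "y \<in> ball Z e" for y
      by (rule deriv_loc_const[OF open_ball that, where c=0]) (use g1 in auto)
    have "deriv h Z = 0"
      by (rule deriv_loc_const[where c=0 and x=Z and S="ball Z e"]) (use e g2 hdd in auto)
    with nz show False by simp
  qed
  have h0: "h Z = 0" for Z
  proof -
    obtain c where c: "\<forall>y\<in>UNIV. h y = c" using const_from_deriv0[of UNIV h] hdiff hd0 by auto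
    have "(h \<longlongrightarrow> 0) at_infinity"
      by (rule Lim_null_comparison[OF _ decay[of "-1"]]) (auto simp: h_def)
    moreover have "h = (\<lambda>_. c)" using c by auto
    ultimately have "((\<lambda>Z::real. c) \<longlongrightarrow> 0) at_infinity" by simp
    then have "c = 0" by (rule const_tends0)
    then show ?thesis using c by simp
  qed
  have gdd: "deriv (deriv g) Z = 0" for Z using hdd[of Z] h0[of Z] by simp
  have gd_diff: "deriv g differentiable (at y)" for y
  proof -
    have "(\<lambda>y. pder [False] \<Psi> (-1) y) differentiable (at y)"
      using sm_Z[OF smooth_pder[OF Psi_smooth], of "-1" "[False]"] by simp
    moreover have "(\<lambda>y. pder [False] \<Psi> (-1) y) = deriv g" by (simp add: g_def fun_eq_iff)
    ultimately show ?thesis by simp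
  qed
  obtain a where a: "\<And>y. deriv g y = a" using const_from_deriv0[of UNIV "deriv g"] gd_diff gdd by auto
  have g_diff: "g differentiable (at y)" for y unfolding g_def using sm_Z[OF Psi_smooth, of "-1"] by simp
  have "\<exists>c. \<forall>y\<in>UNIV. (\<lambda>y. g y - a * y) y = c"
  proof (rule const_from_deriv0)
    show "convex (UNIV :: real set)" by simp
    show "(\<lambda>y. g y - a * y) differentiable (at y)" for y
      using g_diff[of y] by (auto intro!: derivative_intros)
    show "deriv (\<lambda>y. g y - a * y) y = 0" for y
    proof -
      have "(g has_real_derivative a) (at y)"
        using g_diff[of y] a[of y] by (metis DERIV_deriv_iff_real_differentiable)
      then have "((\<lambda>y. g y - a * y) has_real_derivative a - a * 1) (at y)"
        by (auto intro!: derivative_eq_intros)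
      then show ?thesis by (simp add: DERIV_imp_deriv)
    qed
  qed
  then obtain b where b: "\<And>y. g y - a * y = b" by auto
  have Psi_neg: "\<Psi> R Z = a * Z + b" if "R < 0" for R Z using Psig[OF that, of Z] b[of Z] by simp
  have Psi_half: "\<Psi> R Z = a * Z + b" if "R \<le> 0" for R Z
  proof (cases "R < 0")
    case True then show ?thesis by (rule Psi_neg)
  next
    case False
    then have R0: "R = 0" using that by simp
    have c1: "continuous_on {..0::real} (\<lambda>x. \<Psi> x Z)"
    proof -
      have "continuous_on {..0::real} (\<lambda>x. (\<lambda>(R, Z). \<Psi> R Z) (x, Z))"
        by (rule continuous_on_compose2[OF Psi_cont]) (auto simp: half_plane_def intro!: continuous_intros)
      then show ?thesis by simp
    qed
    then have "((\<lambda>x. \<Psi> x Z) \<longlongrightarrow> \<Psi> 0 Z) (at 0 within {..0})"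
      by (simp add: continuous_on_def)
    then have "((\<lambda>x. \<Psi> x Z) \<longlongrightarrow> \<Psi> 0 Z) (at_left 0)"
      by (rule tendsto_within_subset) auto
    moreover have "\<forall>\<^sub>F x in at_left (0::real). \<Psi> x Z = a * Z + b"
      unfolding eventually_at_left_field using Psi_neg by (auto intro!: exI[of _ "-1"])
    ultimately have "((\<lambda>x. a * Z + b) \<longlongrightarrow> \<Psi> 0 Z) (at_left (0::real))"
      by (rule Lim_transform_eventually)
    then have "a * Z + b = \<Psi> 0 Z" using tendsto_const_iff[OF trivial_limit_at_left_real] by blast
    then show ?thesis using R0 by simp
  qed
  have U0: "U R Z = 0" if R: "R < 0" for R Z
  proof -
    have d0: "deriv (\<lambda>x. (U R x)^2) y = 0" for y using C[OF R, of y] h0[of y] hd0[of y] by simp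
    have "\<exists>c. \<forall>y\<in>UNIV. (\<lambda>x. (U R x)^2) y = c"
    proof (rule const_from_deriv0)
      show "convex (UNIV :: real set)" by simp
      show "(\<lambda>x. (U R x)^2) differentiable (at y)" for y
        using sm_Z[OF U_smooth R, of y] by (auto intro!: derivative_intros)
      show "deriv (\<lambda>x. (U R x)^2) y = 0" for y by (rule d0)
    qed
    then obtain c where c: "\<And>y. (U R y)^2 = c" by auto
    have "((\<lambda>x. U R x) \<longlongrightarrow> 0) at_infinity" using tends0_left[OF decay[of R]] R by simp
    then have "((\<lambda>x. (U R x)^2) \<longlongrightarrow> 0^2) at_infinity" by (rule tendsto_power)
    then have "((\<lambda>x::real. c) \<longlongrightarrow> 0) at_infinity" using c by simp
    then have "c = 0" by (rule const_tends0)
    then show ?thesis using c[of Z] by simp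
  qed
  have main: "u1 r z t = 0 \<and> \<omega>1 r z t = 0 \<and>
      \<psi>1 r z t = a * (T - t) powr (-1 + \<gamma>) * z + b * (T - t) powr (-1 + 2 * \<gamma>)"
    if w: "(r, z, t) \<in> W" for r z t
  proof -
    have p: "0 < r" "r < 1" "t < T" using W_props[OF region w] by auto
    define \<tau> where "\<tau> = T - t"
    have tau: "0 < \<tau>" using p by (simp add: \<tau>_def)
    have neg: "(r - 1) * \<tau> powr (- \<gamma>) < 0" using p tau by (simp add: mult_neg_pos)
    have ss: "u1 r z t = \<tau> powr (-1 + \<gamma> / 2) * U ((r - 1) * \<tau> powr (- \<gamma>)) (z * \<tau> powr (- \<gamma>))"
      "\<omega>1 r z t = \<tau> powr (-1) * \<Omega> ((r - 1) * \<tau> powr (- \<gamma>)) (z * \<tau> powr (- \<gamma>))"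
      "\<psi>1 r z t = \<tau> powr (-1 + 2 * \<gamma>) * \<Psi> ((r - 1) * \<tau> powr (- \<gamma>)) (z * \<tau> powr (- \<gamma>))"
      using self_similar[OF w] by (simp_all add: \<tau>_def)
    have "\<psi>1 r z t = \<tau> powr (-1 + 2 * \<gamma>) * (a * (z * \<tau> powr (- \<gamma>)) + b)"
      using ss(3) Psi_neg[OF neg] by simp
    also have "\<dots> = a * (\<tau> powr (-1 + 2 * \<gamma>) * \<tau> powr (- \<gamma>)) * z + b * \<tau> powr (-1 + 2 * \<gamma>)"
      by (simp add: algebra_simps)
    also have "\<tau> powr (-1 + 2 * \<gamma>) * \<tau> powr (- \<gamma>) = \<tau> powr (-1 + \<gamma>)"
    proof -
      have e: "(-1 + 2 * \<gamma>) + (- \<gamma>) = -1 + \<gamma>" by simp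
      show ?thesis by (metis powr_add e)
    qed
    finally have "\<psi>1 r z t = a * \<tau> powr (-1 + \<gamma>) * z + b * \<tau> powr (-1 + 2 * \<gamma>)" .
    moreover have "u1 r z t = 0" using ss(1) U0[OF neg] by simp
    moreover have "\<omega>1 r z t = 0" using ss(2) hOm[OF neg] h0 by simp
    ultimately show ?thesis by (simp add: \<tau>_def)
  qed
  show ?thesis
  proof (intro conjI)
    show "\<forall>(r, z, t)\<in>W. u1 r z t = 0 \<and> \<omega>1 r z t = 0" using main by auto
    show "\<exists>a b. (\<forall>(r, z, t)\<in>W. \<psi>1 r z t = a * (T - t) powr (-1 + \<gamma>) * z + b * (T - t) powr (-1 + 2 * \<gamma>)) \<and>
                (\<forall>(R, Z)\<in>half_plane. \<Psi> R Z = a * Z + b)"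
      apply (rule exI[of _ a], rule exI[of _ b])
      using main Psi_half by (auto simp: half_plane_def)
  qed
qed

end
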